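(* Let $m\ge2$ and let $\mathcal{C}\in\mathbb{S}_{m,n}$ be the symmetric Cauchy tensor with generating vector $c=(c_1,\dots,c_n)^T$, where $c>0$. The following are equivalent: (i) $c_1,\dots,c_n$ are mutually distinct; (ii) $\mathcal{C}$ is strongly doubly nonnegative; (iii) $\mathcal{C}$ is strongly completely positive.
   Context: The symmetric Cauchy tensor with generating vector $c$ has entries $1/(c_{i_1}+\dots+c_{i_m})$. $(\mathcal{A}x^{m-1})_i=\sum_{i_2,\dots,i_m}a_{ii_2\ldots i_m}x_{i_2}\cdots x_{i_m}$; an H-eigenvalue is $\lambda\in\mathbb{R}$ with $\mathcal{A}x^{m-1}=\lambda(x_i^{m-1})_i$ for some nonzero $x\in\mathbb{R}^n$. Strongly doubly nonnegative: all entries nonnegative and all H-eigenvalues positive. Strongly completely positive: $\mathcal{A}=\sum_{k=1}^r(u^{(k)})^m$ with $u^{(k)}\in\mathbb{R}^n_+$ and $\mathrm{span}\{u^{(1)},\dots,u^{(r)}\}=\mathbb{R}^n$, where $(u^m)_{i_1\ldots i_m}=u_{i_1}\cdots u_{i_m}$. *)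

theory Defs
  imports "HOL-Analysis.Analysis"
begin

text \<open>Tensors of order m and dimension n = CARD('n): real-valued functions on index
  lists of length m over the finite index type 'n (values on lists of other lengths
  are irrelevant).\<close>

type_synonym 'n tensor = "'n list \<Rightarrow> real"

definition index_lists :: "nat \<Rightarrow> 'n list set" where
  "index_lists k = {is. length is = k}"

definition cauchy_tensor :: "real^'n \<Rightarrow> 'n tensor" where
  "cauchy_tensor c = (\<lambda>is. 1 / sum_list (map (\<lambda>i. c $ i) is))"

definition tensor_apply :: "nat \<Rightarrow> ('n::finite) tensor \<Rightarrow> real^'n \<Rightarrow> 'n \<Rightarrow> real" where
  "tensor_apply m A x i =
     (\<Sum>is\<in>index_lists (m - 1). A (i # is) * prod_list (map (\<lambda>j. x $ j) is))"

definition H_eigenvalue :: "nat \<Rightarrow> ('n::finite) tensor \<Rightarrow> real \<Rightarrow> bool" where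
  "H_eigenvalue m A lam \<longleftrightarrow>
     (\<exists>x. x \<noteq> 0 \<and> (\<forall>i. tensor_apply m A x i = lam * (x $ i) ^ (m - 1)))"

definition strongly_doubly_nonnegative :: "nat \<Rightarrow> ('n::finite) tensor \<Rightarrow> bool" where
  "strongly_doubly_nonnegative m A \<longleftrightarrow>
     (\<forall>is\<in>index_lists m. A is \<ge> 0) \<and> (\<forall>lam. H_eigenvalue m A lam \<longrightarrow> lam > 0)"

definition rank_one :: "real^'n \<Rightarrow> 'n tensor" where
  "rank_one u = (\<lambda>is. prod_list (map (\<lambda>i. u $ i) is))"

definition strongly_completely_positive :: "nat \<Rightarrow> ('n::finite) tensor \<Rightarrow> bool" where
  "strongly_completely_positive m A \<longleftrightarrow>
     (\<exists>us :: (real^'n) list.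
        (\<forall>u\<in>set us. \<forall>i. u $ i \<ge> 0) \<and>
        span (set us) = UNIV \<and>
        (\<forall>is\<in>index_lists m. A is = (\<Sum>u\<leftarrow>us. rank_one u is)))"

end

theory Submission
  imports Defs "HOL-Real_Asymp.Real_Asymp"
begin


lemma index_lists_alt: "index_lists k = {xs. set xs \<subseteq> UNIV \<and> length xs = k}"
  by (simp add: index_lists_def)

lemma finite_index_lists[simp]: "finite (index_lists k :: ('n::finite) list set)"
  unfolding index_lists_alt by (rule finite_lists_length_eq) simp

lemma index_lists_Suc: "index_lists (Suc k) = (\<lambda>(xs, n). n#xs) ` (index_lists k \<times> UNIV)"
  unfolding index_lists_alt by (rule lists_length_Suc_eq)

lemma sum_index_lists_Suc:
  "(\<Sum>is\<in>index_lists (Suc k). f is) = (\<Sum>j\<in>(UNIV::('n::finite) set). \<Sum>is\<in>index_lists k. f (j#is))"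
proof -
  have inj: "inj_on (\<lambda>(xs, n). n#xs) (index_lists k \<times> (UNIV::'n set))"
    by (auto simp: inj_on_def)
  have "(\<Sum>is\<in>index_lists (Suc k). f is) = (\<Sum>p\<in>index_lists k \<times> UNIV. f ((\<lambda>(xs, n). n#xs) p))"
    unfolding index_lists_Suc by (subst sum.reindex[OF inj]) simp
  also have "\<dots> = (\<Sum>is\<in>index_lists k. \<Sum>j\<in>UNIV. f (j#is))"
    unfolding sum.cartesian_product by (simp add: split_def)
  also have "\<dots> = (\<Sum>j\<in>UNIV. \<Sum>is\<in>index_lists k. f (j#is))"
    by (rule sum.swap)
  finally show ?thesis .
qed

lemma index_lists_0[simp]: "index_lists 0 = {[]}"
  by (auto simp: index_lists_def)

lemma sum_prod_index_lists:
  "(\<Sum>is\<in>index_lists k. prod_list (map g is)) = (\<Sum>j\<in>(UNIV::('n::finite) set). g j) ^ k" for g :: "'n::finite \<Rightarrow> real"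
proof (induction k)
  case 0 then show ?case by simp
next
  case (Suc k)
  show ?case
  proof -
    have "(\<Sum>is\<in>index_lists (Suc k). prod_list (map g is)) = (\<Sum>j\<in>UNIV. g j * (\<Sum>is\<in>index_lists k. prod_list (map g is)))"
      unfolding sum_index_lists_Suc by (rule sum.cong[OF refl]) (simp only: list.map prod_list.Cons sum_distrib_left)
    also have "\<dots> = (\<Sum>j\<in>UNIV. g j) * (\<Sum>j\<in>UNIV. g j)^k"
      by (simp add: Suc sum_distrib_right)
    finally show ?thesis by simp
  qed
qed

lemma rank_one_Cons[simp]: "rank_one u (i#is) = u$i * rank_one u is"
  by (simp add: rank_one_def)

lemma rank_one_Nil[simp]: "rank_one u [] = 1"
  by (simp add: rank_one_def)

lemma sum_sum_list_swap: "(\<Sum>x\<in>A. \<Sum>u\<leftarrow>us. f u x) = (\<Sum>u\<leftarrow>us. \<Sum>x\<in>A. f u x)"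
  by (induction us) (simp_all add: sum.distrib)

lemma sum_list_times_const: "(\<Sum>u\<leftarrow>us. f u) * (c::real) = (\<Sum>u\<leftarrow>us. f u * c)"
  by (induction us) (simp_all add: algebra_simps)

lemma prod_list_map_times: "prod_list (map (\<lambda>j. f j * g j) xs) = prod_list (map f xs) * (prod_list (map g xs) :: real)"
  by (induction xs) simp_all

lemma tensor_apply_decomp:
  fixes us :: "(real^'n::finite) list"
  assumes m: "m \<ge> 1" and A: "\<forall>is\<in>index_lists m. A is = (\<Sum>u\<leftarrow>us. rank_one u is)"
  shows "tensor_apply m A x i = (\<Sum>u\<leftarrow>us. u$i * (u \<bullet> x)^(m-1))"
proof -
  have mem: "xs \<in> index_lists (m-1) \<Longrightarrow> i#xs \<in> index_lists m" for xs
    using m by (auto simp: index_lists_def)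
  have "tensor_apply m A x i = (\<Sum>is\<in>index_lists (m-1). (\<Sum>u\<leftarrow>us. rank_one u (i#is)) * prod_list (map (\<lambda>j. x $ j) is))"
    unfolding tensor_apply_def by (rule sum.cong) (use A mem in auto)
  also have "\<dots> = (\<Sum>u\<leftarrow>us. u$i * (\<Sum>is\<in>index_lists (m-1). prod_list (map (\<lambda>j. u$j * x$j) is)))"
    by (simp add: sum_list_times_const sum_sum_list_swap sum_distrib_left rank_one_def prod_list_map_times mult.assoc)
  also have "\<dots> = (\<Sum>u\<leftarrow>us. u$i * (u \<bullet> x)^(m-1))"
    by (simp add: sum_prod_index_lists inner_vec_def)
  finally show ?thesis .
qed



lemma sum_list_map_nonneg:
  fixes f :: "'a \<Rightarrow> real"
  shows "(\<forall>u\<in>set us. f u \<ge> 0) \<Longrightarrow> (\<Sum>u\<leftarrow>us. f u) \<ge> 0"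
  apply (induction us)
   apply simp
  apply simp
  done

lemma sum_list_map_nonneg_eq0:
  fixes f :: "'a \<Rightarrow> real"
  shows "(\<forall>u\<in>set us. f u \<ge> 0) \<Longrightarrow> (\<Sum>u\<leftarrow>us. f u) = 0 \<Longrightarrow> \<forall>u\<in>set us. f u = 0"
proof (induction us)
  case (Cons a us)
  have s: "(\<Sum>u\<leftarrow>us. f u) \<ge> 0" using Cons.prems(1) by (simp add: sum_list_map_nonneg)
  have fa: "f a \<ge> 0" using Cons.prems(1) by simp
  have "f a + (\<Sum>u\<leftarrow>us. f u) = 0" using Cons.prems(2) by simp
  then have h1: "f a = 0" and h2: "(\<Sum>u\<leftarrow>us. f u) = 0" using s fa by linarith+
  have "\<forall>u\<in>set us. f u = 0"
    by (rule Cons.IH) (use Cons.prems(1) h2 in auto)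
  then show ?case using h1 by simp
qed simp

lemma sum_list_const_times: "(c::real) * (\<Sum>u\<leftarrow>us. f u) = (\<Sum>u\<leftarrow>us. c * f u)"
  by (induction us) (simp_all add: algebra_simps)

lemma rank_one_nonneg: "(\<forall>i. u$i \<ge> 0) \<Longrightarrow> rank_one u xs \<ge> 0"
  by (induction xs) auto

lemma sdnn_of_decomp:
  fixes us :: "(real^'n::finite) list"
  assumes m: "m \<ge> 2"
    and nn: "\<forall>u\<in>set us. \<forall>i. u$i \<ge> 0"
    and A: "\<forall>is\<in>index_lists m. A is = (\<Sum>u\<leftarrow>us. rank_one u is)"
    and nok: "\<And>x. (\<forall>u\<in>set us. u \<bullet> x = 0) \<Longrightarrow> x = 0"
  shows "strongly_doubly_nonnegative m A"
  unfolding strongly_doubly_nonnegative_def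
proof (intro conjI ballI allI impI)
  fix xs :: "'n list" assume "xs \<in> index_lists m"
  then have "A xs = (\<Sum>u\<leftarrow>us. rank_one u xs)" using A by simp
  also have "\<dots> \<ge> 0"
  proof (rule sum_list_nonneg)
    fix y assume "y \<in> set (map (\<lambda>u. rank_one u xs) us)"
    then obtain u where "u \<in> set us" "y = rank_one u xs" by auto
    then show "0 \<le> y" using nn rank_one_nonneg by blast
  qed
  finally show "A xs \<ge> 0" .
next
  fix lam assume "H_eigenvalue m A lam"
  then obtain x where x0: "x \<noteq> 0" and ev: "\<And>i. tensor_apply m A x i = lam * (x $ i) ^ (m - 1)"
    unfolding H_eigenvalue_def by blast
  have ev': "(\<Sum>u\<leftarrow>us. u$i * (u \<bullet> x)^(m-1)) = lam * (x $ i) ^ (m - 1)" for i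
    using ev[of i] tensor_apply_decomp[OF _ A, of x i] m by simp
  obtain k where mk: "m = Suc (Suc k)" using m by (metis add_2_eq_Suc le_Suc_ex)
  show "lam > 0"
  proof (rule ccontr)
    assume "\<not> lam > 0" then have lam: "lam \<le> 0" by simp
    have orth: "\<forall>u\<in>set us. u \<bullet> x = 0"
    proof (cases "even m")
      case True
      have "(\<Sum>i\<in>UNIV. x$i * (\<Sum>u\<leftarrow>us. u$i * (u \<bullet> x)^(m-1))) = (\<Sum>u\<leftarrow>us. (\<Sum>i\<in>UNIV. x$i * u$i) * (u \<bullet> x)^(m-1))"
      proof -
        have "(\<Sum>i\<in>UNIV. x$i * (\<Sum>u\<leftarrow>us. u$i * (u \<bullet> x)^(m-1))) = (\<Sum>i\<in>UNIV. \<Sum>u\<leftarrow>us. x$i * (u$i * (u \<bullet> x)^(m-1)))"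
          by (simp only: sum_list_const_times)
        also have "\<dots> = (\<Sum>u\<leftarrow>us. \<Sum>i\<in>UNIV. x$i * (u$i * (u \<bullet> x)^(m-1)))"
          by (rule sum_sum_list_swap)
        also have "\<dots> = (\<Sum>u\<leftarrow>us. (\<Sum>i\<in>UNIV. x$i * u$i) * (u \<bullet> x)^(m-1))"
          by (simp only: sum_distrib_right mult.assoc)
        finally show ?thesis .
      qed
      also have "\<dots> = (\<Sum>u\<leftarrow>us. (u \<bullet> x)^m)"
        using mk by (simp add: inner_vec_def mult.commute)
      finally have e1: "(\<Sum>i\<in>UNIV. x$i * (\<Sum>u\<leftarrow>us. u$i * (u \<bullet> x)^(m-1))) = (\<Sum>u\<leftarrow>us. (u \<bullet> x)^m)" .
      have "(\<Sum>i\<in>UNIV. x$i * (\<Sum>u\<leftarrow>us. u$i * (u \<bullet> x)^(m-1))) = lam * (\<Sum>i\<in>UNIV. (x$i)^m)"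
        unfolding ev' using mk by (simp add: sum_distrib_left mult_ac)
      also have "\<dots> \<le> 0"
        using lam True by (intro mult_nonpos_nonneg sum_nonneg) (auto simp: zero_le_even_power)
      finally have "(\<Sum>u\<leftarrow>us. (u \<bullet> x)^m) \<le> 0" using e1 by simp
      moreover have "(\<Sum>u\<leftarrow>us. (u \<bullet> x)^m) \<ge> 0"
        by (rule sum_list_map_nonneg) (use True in \<open>auto simp: zero_le_even_power\<close>)
      ultimately have "(\<Sum>u\<leftarrow>us. (u \<bullet> x)^m) = 0" by simp
      then have "\<forall>u\<in>set us. (u \<bullet> x)^m = 0"
        by (rule sum_list_map_nonneg_eq0[rotated]) (use True in \<open>auto simp: zero_le_even_power\<close>)
      then show ?thesis by simp
    next
      case False
      then have ev1: "even (m-1)" using m by simp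
      have "\<forall>u\<in>set us. u$i * (u \<bullet> x)^(m-1) = 0" for i
      proof -
        have ge: "\<forall>u\<in>set us. u$i * (u \<bullet> x)^(m-1) \<ge> 0"
          using nn ev1 by (auto intro!: mult_nonneg_nonneg simp: zero_le_even_power)
        have "(\<Sum>u\<leftarrow>us. u$i * (u \<bullet> x)^(m-1)) \<ge> 0" using ge by (rule sum_list_map_nonneg)
        moreover have "lam * (x $ i) ^ (m - 1) \<le> 0"
          using lam ev1 by (intro mult_nonpos_nonneg) (auto simp: zero_le_even_power)
        ultimately have "(\<Sum>u\<leftarrow>us. u$i * (u \<bullet> x)^(m-1)) = 0" using ev'[of i] by linarith
        then show ?thesis by (rule sum_list_map_nonneg_eq0[OF ge])
      qed
      show ?thesis
      proof
        fix u assume u: "u \<in> set us"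
        show "u \<bullet> x = 0"
        proof (rule ccontr)
          assume ne: "u \<bullet> x \<noteq> 0"
          have "u$i = 0" for i using \<open>\<And>i. \<forall>u\<in>set us. u$i * (u \<bullet> x)^(m-1) = 0\<close>[of i] u ne by auto
          then have "u = 0" by (simp add: vec_eq_iff)
          then show False using ne by simp
        qed
      qed
    qed
    then show False using nok x0 by blast
  qed
qed



lemma sum_axis_diff: "(\<Sum>j\<in>UNIV. (axis a (1::real) - axis b 1)$j * G j) = G a - G b"
proof -
  have "\<And>j. (axis a (1::real) - axis b 1)$j * G j = (if j = a then G j else 0) - (if j = b then G j else 0)"
    by (simp add: axis_def)
  then show ?thesis by (simp add: sum_subtractf)
qed

lemma not_inj_eig:
  fixes c :: "real^'n::finite"
  assumes m: "m \<ge> 2" and ab: "c$a = c$b" "a \<noteq> b"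
  shows "H_eigenvalue m (cauchy_tensor c) 0"
  unfolding H_eigenvalue_def
proof (intro exI conjI allI)
  let ?x = "axis a (1::real) - axis b 1"
  show "?x \<noteq> 0" using ab by (auto simp: vec_eq_iff axis_def)
  fix i
  obtain k where mk: "m - 1 = Suc k" using m by (intro that[of "m - 2"]) simp
  have "tensor_apply m (cauchy_tensor c) ?x i =
     (\<Sum>xs\<in>index_lists k. prod_list (map (\<lambda>j. ?x $ j) xs) *
        (\<Sum>j\<in>UNIV. ?x$j * (\<lambda>j. 1 / (c$i + c$j + sum_list (map (\<lambda>j. c$j) xs))) j))"
    unfolding tensor_apply_def mk sum_index_lists_Suc cauchy_tensor_def
    by (subst sum.swap) (simp add: sum_distrib_left mult_ac add.assoc)
  also have "\<dots> = 0" by (simp only: sum_axis_diff ab) simp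
  finally show "tensor_apply m (cauchy_tensor c) ?x i = 0 * ?x $ i ^ (m - 1)" by simp
qed



lemma pf_lemma:
  fixes c :: "'a \<Rightarrow> real"
  assumes "finite I"
  shows "inj_on c I \<Longrightarrow> finite R \<Longrightarrow> card I \<le> card R \<Longrightarrow> (\<forall>i\<in>I. \<forall>r\<in>R. c i + r > 0)
    \<Longrightarrow> (\<forall>r\<in>R. (\<Sum>i\<in>I. w i / (c i + r)) = 0) \<Longrightarrow> \<forall>i\<in>I. w i = 0"
  using assms
proof (induction I arbitrary: w R rule: finite_induct)
  case empty then show ?case by simp
next
  case (insert i0 I w R)
  from insert.prems have "card R \<ge> Suc (card I)" using insert.hyps by simp
  then obtain r' where r': "r' \<in> R" by (metis card.empty empty_iff not_less_eq_eq zero_le ex_in_conv)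
  define R' where "R' = R - {r'}"
  have cR': "card I \<le> card R'" using \<open>card R \<ge> Suc (card I)\<close> r' insert.prems(2) by (simp add: R'_def)
  define w' where "w' i = w i * (c i0 - c i) / (c i + r')" for i
  have key: "(\<Sum>i\<in>I. w' i / (c i + r)) = 0" if r: "r \<in> R'" for r
  proof -
    have rR: "r \<in> R" and rne: "r \<noteq> r'" using r by (auto simp: R'_def)
    have pos0: "c i0 + r > 0" "c i0 + r' > 0" using insert.prems(4) rR r' by auto
    have pos: "c i + r > 0" "c i + r' > 0" if "i \<in> I" for i using insert.prems(4) rR r' that by auto
    define h where "h s = w i0 + (\<Sum>i\<in>I. w i * ((c i0 + s) / (c i + s)))" for s
    have h0: "h s = 0" if "s \<in> R" for s
    proof -
      have ps: "c i0 + s > 0" using insert.prems(4) that by auto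
      have "(\<Sum>i\<in>insert i0 I. w i / (c i + s)) = 0" using insert.prems(5) that by simp
      then have "(c i0 + s) * (w i0 / (c i0 + s) + (\<Sum>i\<in>I. w i / (c i + s))) = 0"
        using insert.hyps by simp
      moreover have "(c i0 + s) * (w i0 / (c i0 + s) + (\<Sum>i\<in>I. w i / (c i + s))) = h s"
      proof -
        have "(c i0 + s) * (\<Sum>i\<in>I. w i / (c i + s)) = (\<Sum>i\<in>I. w i * ((c i0 + s) / (c i + s)))"
          by (simp add: sum_distrib_left mult.commute)
        then show ?thesis unfolding h_def using ps by (simp add: distrib_left)
      qed
      ultimately show ?thesis by simp
    qed
    have "h r - h r' = (r' - r) * (\<Sum>i\<in>I. w' i / (c i + r))"
    proof -
      have "h r - h r' = (\<Sum>i\<in>I. w i * ((c i0 + r) / (c i + r)) - w i * ((c i0 + r') / (c i + r')))"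
        unfolding h_def by (simp add: sum_subtractf)
      also have "\<dots> = (\<Sum>i\<in>I. (r' - r) * (w' i / (c i + r)))"
      proof (rule sum.cong[OF refl])
        fix i assume "i \<in> I"
        then have p1: "c i + r > 0" and p2: "c i + r' > 0" using pos by auto
        show "w i * ((c i0 + r) / (c i + r)) - w i * ((c i0 + r') / (c i + r')) = (r' - r) * (w' i / (c i + r))"
          unfolding w'_def using p1 p2 by (simp add: field_simps)
      qed
      finally show ?thesis by (simp add: sum_distrib_left)
    qed
    then show ?thesis using h0[OF rR] h0[OF r'] rne by simp
  qed
  have inj: "inj_on c I" using insert.prems(1) by (simp add: inj_on_insert)
  have "\<forall>i\<in>I. w' i = 0"
    by (rule insert.IH[of R' w']) (use inj cR' insert.prems key in \<open>auto simp: R'_def\<close>)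
  then have wI: "\<forall>i\<in>I. w i = 0"
  proof (intro ballI)
    fix i assume i: "i \<in> I" and "\<forall>i\<in>I. w' i = 0"
    then have "w' i = 0" by simp
    moreover have "c i0 \<noteq> c i" using insert.prems(1) insert.hyps i by (auto simp: inj_on_def)
    moreover have "c i + r' > 0" using insert.prems(4) i r' by auto
    ultimately show "w i = 0" unfolding w'_def by simp
  qed
  have "(\<Sum>i\<in>insert i0 I. w i / (c i + r')) = 0" using insert.prems(5) r' by simp
  then have "w i0 / (c i0 + r') = 0" using insert.hyps wI by simp
  moreover have "c i0 + r' > 0" using insert.prems(4) r' by auto
  ultimately have "w i0 = 0" by simp
  then show ?case using wI by simp
qed



lemma dep_lemma:
  fixes F :: "'k \<Rightarrow> 'i \<Rightarrow> real"
  assumes "finite I"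
  shows "finite K \<Longrightarrow> card I < card K \<Longrightarrow> \<exists>\<mu>. (\<exists>k\<in>K. \<mu> k \<noteq> 0) \<and> (\<forall>i\<in>I. (\<Sum>k\<in>K. \<mu> k * F k i) = 0)"
  using assms
proof (induction I arbitrary: K F rule: finite_induct)
  case empty
  then have "K \<noteq> {}" by auto
  then obtain k where k: "k \<in> K" by auto
  show ?case by (rule exI[of _ "\<lambda>j. if j = k then 1 else 0"]) (use k in auto)
next
  case (insert i0 I K F)
  have cI: "card I < card K" using insert.prems insert.hyps by simp
  show ?case
  proof (cases "\<forall>k\<in>K. F k i0 = 0")
    case True
    obtain \<mu> where \<mu>: "\<exists>k\<in>K. \<mu> k \<noteq> 0" "\<forall>i\<in>I. (\<Sum>k\<in>K. \<mu> k * F k i) = 0"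
      using insert.IH[OF insert.prems(1) cI] by blast
    have "(\<Sum>k\<in>K. \<mu> k * F k i0) = 0" using True by simp
    then show ?thesis using \<mu> by auto
  next
    case False
    then obtain k0 where k0: "k0 \<in> K" "F k0 i0 \<noteq> 0" by auto
    define G where "G k i = F k i - (F k i0 / F k0 i0) * F k0 i" for k i
    define K' where "K' = K - {k0}"
    have fK': "finite K'" using insert.prems(1) by (simp add: K'_def)
    have cK': "card I < card K'" using insert.prems insert.hyps k0 by (simp add: K'_def)
    obtain \<mu>' where \<mu>': "\<exists>k\<in>K'. \<mu>' k \<noteq> 0" "\<forall>i\<in>I. (\<Sum>k\<in>K'. \<mu>' k * G k i) = 0"
      using insert.IH[OF fK' cK', of G] by blast
    define S where "S = (\<Sum>j\<in>K'. \<mu>' j * F j i0)"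
    define \<mu> where "\<mu> k = (if k = k0 then - S / F k0 i0 else \<mu>' k)" for k
    have total: "(\<Sum>k\<in>K. \<mu> k * F k i) = (\<Sum>k\<in>K'. \<mu>' k * G k i)" for i
    proof -
      have "(\<Sum>k\<in>K. \<mu> k * F k i) = \<mu> k0 * F k0 i + (\<Sum>k\<in>K'. \<mu> k * F k i)"
        unfolding K'_def by (rule sum.remove[OF insert.prems(1) k0(1)])
      also have "(\<Sum>k\<in>K'. \<mu> k * F k i) = (\<Sum>k\<in>K'. \<mu>' k * G k i + \<mu>' k * F k i0 * (F k0 i / F k0 i0))"
        by (rule sum.cong[OF refl]) (auto simp: \<mu>_def K'_def G_def algebra_simps)
      also have "\<dots> = (\<Sum>k\<in>K'. \<mu>' k * G k i) + S * (F k0 i / F k0 i0)"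
        by (simp add: sum.distrib S_def sum_distrib_right sum_divide_distrib)
      finally show ?thesis by (simp add: \<mu>_def)
    qed
    show ?thesis
    proof (intro exI conjI)
      show "\<exists>k\<in>K. \<mu> k \<noteq> 0" using \<mu>'(1) by (auto simp: \<mu>_def K'_def)
      show "\<forall>i\<in>insert i0 I. (\<Sum>k\<in>K. \<mu> k * F k i) = 0"
      proof
        fix i assume "i \<in> insert i0 I"
        then show "(\<Sum>k\<in>K. \<mu> k * F k i) = 0"
        proof
          assume "i = i0"
          have "G k i0 = 0" for k using k0(2) by (simp add: G_def)
          then show ?thesis unfolding total \<open>i = i0\<close> by simp
        next
          assume "i \<in> I" then show ?thesis unfolding total using \<mu>'(2) by simp
        qed
      qed
    qed
  qed
qed

lemma cara_lemma:
  fixes F :: "'k \<Rightarrow> 'i \<Rightarrow> real"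
  assumes I: "finite I"
  shows "finite K \<Longrightarrow> (\<forall>k\<in>K. lam k \<ge> 0) \<Longrightarrow> \<exists>K' lam'. K' \<subseteq> K \<and> card K' \<le> card I \<and> (\<forall>k\<in>K'. lam' k \<ge> 0)
     \<and> (\<forall>i\<in>I. (\<Sum>k\<in>K. lam k * F k i) = (\<Sum>k\<in>K'. lam' k * F k i))"
proof (induction "card K" arbitrary: K lam rule: less_induct)
  case less
  show ?case
  proof (cases "card K \<le> card I")
    case True then show ?thesis using less.prems by blast
  next
    case False
    then have cK: "card I < card K" by simp
    obtain \<mu> where \<mu>: "\<exists>k\<in>K. \<mu> k \<noteq> 0" "\<forall>i\<in>I. (\<Sum>k\<in>K. \<mu> k * F k i) = 0"
      using dep_lemma[OF I less.prems(1) cK] by blast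
    obtain \<nu> where \<nu>: "\<exists>k\<in>K. \<nu> k > 0" "\<forall>i\<in>I. (\<Sum>k\<in>K. \<nu> k * F k i) = 0"
    proof (cases "\<exists>k\<in>K. \<mu> k > 0")
      case True then show ?thesis using \<mu> that by blast
    next
      case False
      then have "\<exists>k\<in>K. - \<mu> k > 0" using \<mu>(1) by force
      moreover have "\<forall>i\<in>I. (\<Sum>k\<in>K. - \<mu> k * F k i) = 0" using \<mu>(2) by (simp add: sum_negf)
      ultimately show ?thesis using that[of "\<lambda>k. - \<mu> k"] by blast
    qed
    define P where "P = {k\<in>K. \<nu> k > 0}"
    have fP: "finite P" using less.prems(1) by (simp add: P_def)
    have neP: "P \<noteq> {}" using \<nu>(1) by (auto simp: P_def)
    define \<theta> where "\<theta> = Min ((\<lambda>k. lam k / \<nu> k) ` P)"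
    have "\<theta> \<in> (\<lambda>k. lam k / \<nu> k) ` P" unfolding \<theta>_def using fP neP by (intro Min_in) auto
    then obtain k1 where k1: "k1 \<in> P" "\<theta> = lam k1 / \<nu> k1" by auto
    have \<theta>le: "\<theta> \<le> lam k / \<nu> k" if "k \<in> P" for k
      unfolding \<theta>_def using fP that by (intro Min_le) auto
    have \<theta>0: "\<theta> \<ge> 0" using k1 less.prems(2) by (auto simp: P_def)
    define lam2 where "lam2 k = lam k - \<theta> * \<nu> k" for k
    have lam2nn: "lam2 k \<ge> 0" if "k \<in> K" for k
    proof (cases "\<nu> k > 0")
      case True
      then have "\<theta> \<le> lam k / \<nu> k" using \<theta>le that by (auto simp: P_def)
      then have "\<theta> * \<nu> k \<le> lam k" using True by (simp add: field_simps)
      then show ?thesis by (simp add: lam2_def)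
    next
      case False
      then have "\<theta> * \<nu> k \<le> 0" using \<theta>0 by (simp add: mult_nonneg_nonpos)
      moreover have "lam k \<ge> 0" using less.prems(2) that by blast
      ultimately show ?thesis by (simp add: lam2_def)
    qed
    have k1K: "k1 \<in> K" and nk1: "\<nu> k1 > 0" using k1 by (auto simp: P_def)
    have lam2k1: "lam2 k1 = 0" using k1 nk1 by (simp add: lam2_def)
    have eq1: "(\<Sum>k\<in>K. lam k * F k i) = (\<Sum>k\<in>K - {k1}. lam2 k * F k i)" if "i \<in> I" for i
    proof -
      have "(\<Sum>k\<in>K. lam2 k * F k i) = (\<Sum>k\<in>K. lam k * F k i) - \<theta> * (\<Sum>k\<in>K. \<nu> k * F k i)"
        by (simp add: lam2_def algebra_simps sum_subtractf sum_distrib_left)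
      also have "\<dots> = (\<Sum>k\<in>K. lam k * F k i)" using \<nu>(2) that by simp
      finally have "(\<Sum>k\<in>K. lam k * F k i) = (\<Sum>k\<in>K. lam2 k * F k i)" by simp
      also have "\<dots> = lam2 k1 * F k1 i + (\<Sum>k\<in>K - {k1}. lam2 k * F k i)"
        by (rule sum.remove[OF less.prems(1) k1K])
      finally show ?thesis using lam2k1 by simp
    qed
    have lt: "card (K - {k1}) < card K" using less.prems(1) k1K by (meson card_Diff1_less)
    obtain K' lam' where K': "K' \<subseteq> K - {k1}" "card K' \<le> card I" "\<forall>k\<in>K'. lam' k \<ge> 0"
      "\<forall>i\<in>I. (\<Sum>k\<in>K - {k1}. lam2 k * F k i) = (\<Sum>k\<in>K'. lam' k * F k i)"
      using less.hyps[OF lt, of lam2] less.prems(1) lam2nn by auto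
    show ?thesis
      by (rule exI[of _ K'], rule exI[of _ lam']) (use K' eq1 in auto)
  qed
qed



definition cpD :: "nat \<Rightarrow> nat \<Rightarrow> ('n::finite) tensor \<Rightarrow> bool" where
  "cpD m D A \<longleftrightarrow> (\<exists>U::nat \<Rightarrow> real^'n. (\<forall>k i. U k $ i \<ge> 0) \<and>
      (\<forall>xs\<in>index_lists m. A xs = (\<Sum>k<D. rank_one (U k) xs)))"

lemma rank_one_scale: "rank_one (a *\<^sub>R u) xs = a ^ length xs * rank_one u xs"
  by (induction xs) auto

lemma rank_one_zero: "xs \<noteq> [] \<Longrightarrow> rank_one 0 xs = 0"
  by (cases xs) auto

lemma index_lists_length: "xs \<in> index_lists m \<Longrightarrow> length xs = m"
  by (simp add: index_lists_def)

lemma cp_fin: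
  fixes U :: "'k \<Rightarrow> real^'n::finite"
  assumes m: "m \<ge> 1" and fK: "finite K" and nn: "\<forall>k\<in>K. \<forall>i. U k $ i \<ge> 0"
    and A: "\<forall>xs\<in>index_lists m. A xs = (\<Sum>k\<in>K. rank_one (U k) xs)"
  shows "cpD m (card (index_lists m :: 'n list set)) A"
proof -
  let ?D = "card (index_lists m :: 'n list set)"
  obtain K' lam' where K': "K' \<subseteq> K" "card K' \<le> ?D" "\<forall>k\<in>K'. lam' k \<ge> 0"
      "\<forall>xs\<in>index_lists m. (\<Sum>k\<in>K. 1 * rank_one (U k) xs) = (\<Sum>k\<in>K'. lam' k * rank_one (U k) xs)"
    using cara_lemma[OF finite_index_lists[of m] fK, where lam="\<lambda>_. 1" and F="\<lambda>k xs. rank_one (U k) xs"] by auto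
  have fK': "finite K'" using K'(1) fK finite_subset by blast
  obtain e where e: "bij_betw e {0..<card K'} K'" using ex_bij_betw_nat_finite[OF fK'] by blast
  define V where "V j = (if j < card K' then root m (lam' (e j)) *\<^sub>R U (e j) else 0)" for j
  show ?thesis
    unfolding cpD_def
  proof (intro exI conjI allI ballI)
    fix k i
    show "V k $ i \<ge> 0"
    proof (cases "k < card K'")
      case True
      then have "e k \<in> K'" using e by (auto simp: bij_betw_def)
      then show ?thesis using True K' nn by (auto simp: V_def intro!: mult_nonneg_nonneg real_root_ge_zero)
    qed (simp add: V_def)
  next
    fix xs :: "'n list" assume xs: "xs \<in> index_lists m"
    have len: "length xs = m" using xs by (simp add: index_lists_def)
    have "(\<Sum>k<?D. rank_one (V k) xs) = (\<Sum>k\<in>{0..<card K'}. rank_one (V k) xs)"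
    proof (rule sum.mono_neutral_right)
      show "{0..<card K'} \<subseteq> {..<?D}" using K'(2) by auto
      show "\<forall>i\<in>{..<?D} - {0..<card K'}. rank_one (V i) xs = 0"
      proof
        fix i assume "i \<in> {..<?D} - {0..<card K'}"
        moreover have "rank_one 0 xs = 0" using m len by (intro rank_one_zero) auto
        ultimately show "rank_one (V i) xs = 0" by (simp add: V_def)
      qed
    qed simp
    also have "\<dots> = (\<Sum>k\<in>{0..<card K'}. lam' (e k) * rank_one (U (e k)) xs)"
    proof (rule sum.cong[OF refl])
      fix k assume k: "k \<in> {0..<card K'}"
      then have "e k \<in> K'" using e by (auto simp: bij_betw_def)
      then have "lam' (e k) \<ge> 0" using K'(3) by blast
      then show "rank_one (V k) xs = lam' (e k) * rank_one (U (e k)) xs"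
        using k m len by (simp add: V_def rank_one_scale)
    qed
    also have "\<dots> = (\<Sum>k\<in>K'. lam' k * rank_one (U k) xs)"
      by (rule sum.reindex_bij_betw[OF e])
    also have "\<dots> = A xs" using K'(4) A xs by simp
    finally show "A xs = (\<Sum>k<?D. rank_one (V k) xs)" by simp
  qed
qed

lemma tendsto_rank_one:
  assumes "w \<longlonglongrightarrow> v"
  shows "(\<lambda>j. rank_one (w j) xs) \<longlonglongrightarrow> rank_one v xs"
proof (induction xs)
  case Nil then show ?case by simp
next
  case (Cons i xs)
  show ?case unfolding rank_one_Cons
    by (intro tendsto_mult Cons tendsto_vec_nth assms)
qed

lemma rank_one_replicate: "rank_one u (replicate k i) = (u $ i) ^ k"
  by (induction k) auto

lemma cpD_closed:
  fixes A :: "nat \<Rightarrow> ('n::finite) tensor"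
  assumes m: "m \<ge> 1"
  shows "(\<forall>j. cpD m D (A j)) \<Longrightarrow> (\<forall>xs\<in>index_lists m. (\<lambda>j. A j xs) \<longlonglongrightarrow> L xs) \<Longrightarrow> cpD m D L"
proof (induction D arbitrary: A L)
  case 0
  show ?case unfolding cpD_def
  proof (intro exI[of _ "\<lambda>_. 0"] conjI allI ballI)
    fix xs :: "'n list" assume xs: "xs \<in> index_lists m"
    have "\<forall>j. A j xs = 0" using "0.prems"(1) xs by (auto simp: cpD_def)
    then have "(\<lambda>j. A j xs) \<longlonglongrightarrow> 0" by simp
    then have "L xs = 0" using "0.prems"(2) xs LIMSEQ_unique by blast
    then show "L xs = (\<Sum>k<(0::nat). rank_one ((\<lambda>_. 0::real^'n) k) xs)" by simp
  qed simp
next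
  case (Suc D)
  have "\<forall>j. \<exists>Uj. (\<forall>k i. Uj k $ i \<ge> (0::real)) \<and> (\<forall>xs\<in>index_lists m. A j xs = (\<Sum>k<Suc D. rank_one (Uj k) xs))"
    using Suc.prems(1) by (simp add: cpD_def)
  then obtain U where U: "\<forall>j. (\<forall>k i. U j k $ i \<ge> (0::real)) \<and> (\<forall>xs\<in>index_lists m. A j xs = (\<Sum>k<Suc D. rank_one (U j k) xs))"
    using choice[of "\<lambda>j Uj. (\<forall>k i. Uj k $ i \<ge> (0::real)) \<and> (\<forall>xs\<in>index_lists m. A j xs = (\<Sum>k<Suc D. rank_one (Uj k) xs))"] by blast
  define v where "v j = U j D" for j
  have rep: "replicate m i \<in> index_lists m" for i by (simp add: index_lists_def)
  have vle: "(v j $ i) ^ m \<le> A j (replicate m i)" for j i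
  proof -
    have "A j (replicate m i) = (\<Sum>k<D. rank_one (U j k) (replicate m i)) + rank_one (v j) (replicate m i)"
      using U rep[of i] by (simp add: v_def)
    moreover have "(\<Sum>k<D. rank_one (U j k) (replicate m i)) \<ge> 0"
      using U by (intro sum_nonneg) (simp add: rank_one_replicate)
    ultimately show ?thesis by (simp add: rank_one_replicate)
  qed
  have "\<exists>B. \<forall>j. A j (replicate m i) \<le> B" for i
  proof -
    have "bounded (range (\<lambda>j. A j (replicate m i)))"
      using Suc.prems(2) rep[of i] by (intro convergent_imp_bounded) blast
    then obtain a where "\<forall>x\<in>range (\<lambda>j. A j (replicate m i)). \<bar>x\<bar> \<le> a" unfolding bounded_real by blast
    then show ?thesis by (intro exI[of _ a]) (auto simp: abs_le_iff)
  qed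
  then obtain B where B: "\<forall>i j. A j (replicate m i) \<le> B i" by metis
  have vbd: "\<bar>v j $ i\<bar> \<le> max 1 (B i)" for j i
  proof -
    have v0: "v j $ i \<ge> 0" using U by (simp add: v_def)
    show ?thesis
    proof (cases "v j $ i \<le> 1")
      case True then show ?thesis using v0 by simp
    next
      case False
      then have "v j $ i \<le> (v j $ i) ^ m" using m by (intro self_le_power) auto
      also have "\<dots> \<le> B i" using vle[of j i] B by (meson order_trans)
      finally show ?thesis using v0 by simp
    qed
  qed
  have "bounded (range v)"
    unfolding bounded_iff
  proof (intro exI ballI)
    fix x assume "x \<in> range v"
    then obtain j where "x = v j" by auto
    have "norm x \<le> (\<Sum>i\<in>UNIV. \<bar>x $ i\<bar>)" by (rule norm_le_l1_cart)
    also have "\<dots> \<le> (\<Sum>i\<in>UNIV. max 1 (B i))" using vbd \<open>x = v j\<close> by (intro sum_mono) auto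
    finally show "norm x \<le> (\<Sum>i\<in>UNIV. max 1 (B i))" .
  qed
  then obtain l r where r: "strict_mono r" "(v \<circ> r) \<longlonglongrightarrow> l"
    using bounded_imp_convergent_subsequence by blast
  have l0: "l $ i \<ge> 0" for i
  proof (rule LIMSEQ_le_const)
    show "(\<lambda>j. (v \<circ> r) j $ i) \<longlonglongrightarrow> l $ i" by (intro tendsto_vec_nth r(2))
    show "\<exists>N. \<forall>n\<ge>N. 0 \<le> (v \<circ> r) n $ i" using U by (simp add: v_def)
  qed
  define A' where "A' j xs = A (r j) xs - rank_one (v (r j)) xs" for j xs
  have cpA': "cpD m D (A' j)" for j
    unfolding cpD_def
  proof (intro exI[of _ "U (r j)"] conjI allI ballI)
    show "U (r j) k $ i \<ge> 0" for k i using U by blast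
    fix xs :: "'n list" assume "xs \<in> index_lists m"
    then show "A' j xs = (\<Sum>k<D. rank_one (U (r j) k) xs)"
      using U by (simp add: A'_def v_def)
  qed
  have limA': "(\<lambda>j. A' j xs) \<longlonglongrightarrow> L xs - rank_one l xs" if "xs \<in> index_lists m" for xs
  proof -
    have "(\<lambda>j. A (r j) xs) \<longlonglongrightarrow> L xs"
      using LIMSEQ_subseq_LIMSEQ[OF Suc.prems(2)[rule_format, OF that] r(1)] by (simp add: o_def)
    moreover have "(\<lambda>j. rank_one (v (r j)) xs) \<longlonglongrightarrow> rank_one l xs"
      using tendsto_rank_one[OF r(2)] by (simp add: o_def)
    ultimately show ?thesis unfolding A'_def by (intro tendsto_diff)
  qed
  have "cpD m D (\<lambda>xs. L xs - rank_one l xs)"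
    using Suc.IH[of A' "\<lambda>xs. L xs - rank_one l xs"] cpA' limA' by blast
  then obtain W where W: "\<forall>k i. W k $ i \<ge> (0::real)" "\<forall>xs\<in>index_lists m. L xs - rank_one l xs = (\<Sum>k<D. rank_one (W k) xs)"
    unfolding cpD_def by blast
  show ?case unfolding cpD_def
  proof (intro exI[of _ "\<lambda>k. if k < D then W k else l"] conjI allI ballI)
    show "(if k < D then W k else l) $ i \<ge> 0" for k i using W l0 by auto
    fix xs :: "'n list" assume xs: "xs \<in> index_lists m"
    have "(\<Sum>k<Suc D. rank_one (if k < D then W k else l) xs) = (\<Sum>k<D. rank_one (W k) xs) + rank_one l xs"
      by simp
    moreover have "L xs - rank_one l xs = (\<Sum>k<D. rank_one (W k) xs)" using W(2) xs by blast
    ultimately show "L xs = (\<Sum>k<Suc D. rank_one (if k < D then W k else l) xs)" by linarith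
  qed
qed



lemma lim_q: "(s::real) > 0 \<Longrightarrow> ((\<lambda>j::nat. (1 / (real j + 2)) / (1 - (1 - 1/(real j + 2)) powr s)) \<longlonglongrightarrow> inverse s)"
  by real_asymp

lemma rank_one_chi: "rank_one (\<chi> i. a * g i) xs = a ^ length xs * prod_list (map g xs)"
  by (induction xs) auto

lemma prod_list_powr:
  fixes q :: real assumes "q > 0"
  shows "prod_list (map (\<lambda>i. (q powr (c i)) ^ k) xs) = (q powr (sum_list (map c xs))) ^ k"
proof (induction xs)
  case (Cons a xs)
  show ?case using Cons by (simp add: powr_add power_mult_distrib)
qed (use assms in simp)

lemma sum_list_pos:
  fixes c :: "'a \<Rightarrow> real"
  assumes "\<forall>i. c i > 0"
  shows "xs \<noteq> [] \<Longrightarrow> sum_list (map c xs) > 0"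
proof (induction xs)
  case (Cons a xs)
  show ?case
  proof (cases "xs = []")
    case True then show ?thesis using assms by simp
  next
    case False then have "sum_list (map c xs) > 0" using Cons.IH by blast
    then show ?thesis using assms by (simp add: add_pos_pos)
  qed
qed simp

lemma cauchy_cpD:
  fixes c :: "real^'n::finite"
  assumes m: "m \<ge> 1" and c: "\<forall>i. c$i > 0"
  shows "cpD m (card (index_lists m :: 'n list set)) (cauchy_tensor c)"
proof -
  let ?D = "card (index_lists m :: 'n list set)"
  define s where "s xs = sum_list (map (\<lambda>i. c$i) xs)" for xs :: "'n list"
  have spos: "s xs > 0" if "xs \<in> index_lists m" for xs
  proof -
    have "xs \<noteq> []" using that m by (auto simp: index_lists_def)
    then show ?thesis unfolding s_def using c by (intro sum_list_pos) auto
  qed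
  have step1: "cpD m ?D (\<lambda>xs. (1 - q) / (1 - q powr s xs))" if q: "0 < q" "q < 1" for q
  proof (rule cpD_closed[OF m, where A="\<lambda>N xs. \<Sum>k<N. (1 - q) * (q powr s xs) ^ k"])
    show "\<forall>N. cpD m ?D (\<lambda>xs. \<Sum>k<N. (1 - q) * (q powr s xs) ^ k)"
    proof
      fix N :: nat
      define U where "U k = (\<chi> i. root m (1 - q) * (q powr (c$i)) ^ k)" for k :: nat
      show "cpD m ?D (\<lambda>xs. \<Sum>k<N. (1 - q) * (q powr s xs) ^ k)"
      proof (rule cp_fin[OF m, where K="{..<N}" and U=U])
        show "\<forall>k\<in>{..<N}. \<forall>i. U k $ i \<ge> 0" using q
          by (auto simp: U_def intro!: mult_nonneg_nonneg real_root_ge_zero)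
        show "\<forall>xs\<in>index_lists m. (\<Sum>k<N. (1 - q) * (q powr s xs) ^ k) = (\<Sum>k\<in>{..<N}. rank_one (U k) xs)"
        proof
          fix xs :: "'n list" assume "xs \<in> index_lists m"
          then have len: "length xs = m" by (simp add: index_lists_def)
          have "rank_one (U k) xs = (1 - q) * (q powr s xs) ^ k" for k
            unfolding U_def rank_one_chi len using q m
            by (simp add: prod_list_powr s_def)
          then show "(\<Sum>k<N. (1 - q) * (q powr s xs) ^ k) = (\<Sum>k\<in>{..<N}. rank_one (U k) xs)" by simp
        qed
      qed simp
    qed
    show "\<forall>xs\<in>index_lists m. (\<lambda>N. \<Sum>k<N. (1 - q) * (q powr s xs) ^ k) \<longlonglongrightarrow> (1 - q) / (1 - q powr s xs)"
    proof
      fix xs :: "'n list" assume xs: "xs \<in> index_lists m"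
      have "q powr s xs < 1 powr s xs" using q spos[OF xs] by (intro powr_less_mono2) auto
      then have lt: "norm (q powr s xs) < 1" using q by simp
      have "(\<lambda>k. (1 - q) * (q powr s xs) ^ k) sums ((1 - q) * (1 / (1 - q powr s xs)))"
        by (intro sums_mult geometric_sums lt)
      then show "(\<lambda>N. \<Sum>k<N. (1 - q) * (q powr s xs) ^ k) \<longlonglongrightarrow> (1 - q) / (1 - q powr s xs)"
        by (simp add: sums_def)
    qed
  qed
  show ?thesis
  proof (rule cpD_closed[OF m, where A="\<lambda>j xs. (1 - (1 - 1/(real j + 2))) / (1 - (1 - 1/(real j + 2)) powr s xs)"])
    show "\<forall>j. cpD m ?D (\<lambda>xs. (1 - (1 - 1/(real j + 2))) / (1 - (1 - 1/(real j + 2)) powr s xs))"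
    proof
      fix j :: nat
      have "0 < 1 - 1/(real j + 2)" "1 - 1/(real j + 2) < 1" by (simp_all add: field_simps)
      then show "cpD m ?D (\<lambda>xs. (1 - (1 - 1/(real j + 2))) / (1 - (1 - 1/(real j + 2)) powr s xs))"
        by (rule step1)
    qed
    show "\<forall>xs\<in>index_lists m. (\<lambda>j. (1 - (1 - 1/(real j + 2))) / (1 - (1 - 1/(real j + 2)) powr s xs)) \<longlonglongrightarrow> cauchy_tensor c xs"
    proof
      fix xs :: "'n list" assume xs: "xs \<in> index_lists m"
      have "cauchy_tensor c xs = inverse (s xs)" by (simp add: cauchy_tensor_def s_def divide_inverse)
      then show "(\<lambda>j. (1 - (1 - 1/(real j + 2))) / (1 - (1 - 1/(real j + 2)) powr s xs)) \<longlonglongrightarrow> cauchy_tensor c xs"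
        using lim_q[OF spos[OF xs]] by simp
    qed
  qed
qed



lemma span_iff_no_orth:
  fixes S :: "(real^'n::finite) set"
  shows "span S = UNIV \<longleftrightarrow> (\<forall>x. (\<forall>u\<in>S. u \<bullet> x = 0) \<longrightarrow> x = 0)"
proof
  assume sp: "span S = UNIV"
  show "\<forall>x. (\<forall>u\<in>S. u \<bullet> x = 0) \<longrightarrow> x = 0"
  proof (intro allI impI)
    fix x assume o: "\<forall>u\<in>S. u \<bullet> x = 0"
    have "orthogonal x x"
      by (rule orthogonal_to_span) (use sp o in \<open>auto simp: orthogonal_def inner_commute\<close>)
    then show "x = 0" by (simp add: orthogonal_def)
  qed
next
  assume h: "\<forall>x. (\<forall>u\<in>S. u \<bullet> x = 0) \<longrightarrow> x = 0"
  show "span S = UNIV"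
  proof (rule ccontr)
    assume "span S \<noteq> UNIV"
    then obtain a where a: "a \<noteq> 0" "\<forall>x\<in>span S. a \<bullet> x = 0" using span_not_UNIV_orthogonal by blast
    have "\<forall>u\<in>S. u \<bullet> a = 0" using a(2) span_base by (fastforce simp: inner_commute)
    then show False using h a(1) by blast
  qed
qed

lemma kernel_lemma:
  fixes c :: "real^'n::finite" and us :: "(real^'n) list"
  assumes m: "m \<ge> 2" and c: "\<forall>i. c$i > 0" and inj: "inj (\<lambda>i. c$i)"
    and dec: "\<forall>xs\<in>index_lists m. cauchy_tensor c xs = (\<Sum>u\<leftarrow>us. rank_one u xs)"
    and o: "\<forall>u\<in>set us. u \<bullet> x = 0"
  shows "x = 0"
proof -
  define R where "R = (\<lambda>j. real (m - 1) * c$j) ` UNIV"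
  have injR: "inj (\<lambda>j. real (m - 1) * c$j)"
    using inj m by (auto simp: inj_def)
  have cardR: "card R = card (UNIV :: 'n set)" unfolding R_def by (rule card_image[OF injR])
  have "\<forall>i\<in>UNIV. x$i = 0"
  proof (rule pf_lemma[where c="\<lambda>i. c$i" and R=R])
    show "finite (UNIV :: 'n set)" by simp
    show "inj_on (\<lambda>i. c$i) UNIV" using inj by simp
    show "finite R" by (simp add: R_def)
    show "card (UNIV :: 'n set) \<le> card R" using cardR by simp
    show "\<forall>i\<in>UNIV. \<forall>r\<in>R. c$i + r > 0" using c m by (auto simp: R_def intro!: add_pos_pos mult_pos_pos)
    show "\<forall>r\<in>R. (\<Sum>i\<in>UNIV. x$i / (c$i + r)) = 0"
    proof
      fix r assume "r \<in> R"
      then obtain j where r: "r = real (m - 1) * c$j" by (auto simp: R_def)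
      define ys where "ys = replicate (m - 1) j"
      have mem: "i # ys \<in> index_lists m" for i using m by (simp add: ys_def index_lists_def)
      have val: "cauchy_tensor c (i # ys) = 1 / (c$i + r)" for i
        by (simp add: cauchy_tensor_def ys_def r sum_list_replicate)
      have "(\<Sum>i\<in>UNIV. x$i / (c$i + r)) = (\<Sum>i\<in>UNIV. x$i * cauchy_tensor c (i # ys))"
        by (simp add: val)
      also have "\<dots> = (\<Sum>i\<in>UNIV. \<Sum>u\<leftarrow>us. x$i * rank_one u (i # ys))"
        using dec mem by (simp add: sum_list_const_times)
      also have "\<dots> = (\<Sum>u\<leftarrow>us. \<Sum>i\<in>UNIV. x$i * rank_one u (i # ys))"
        by (rule sum_sum_list_swap)
      also have "\<dots> = (\<Sum>u\<leftarrow>us. (u \<bullet> x) * rank_one u ys)"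
      proof -
        have "(\<Sum>i\<in>UNIV. x$i * rank_one u (i # ys)) = (u \<bullet> x) * rank_one u ys" for u
          by (simp add: inner_vec_def sum_distrib_left mult_ac)
        then show ?thesis by simp
      qed
      also have "\<dots> = 0"
      proof -
        have "map (\<lambda>u. (u \<bullet> x) * rank_one u ys) us = map (\<lambda>u. 0) us"
          using o by (intro map_cong) auto
        then have "(\<Sum>u\<leftarrow>us. (u \<bullet> x) * rank_one u ys) = (\<Sum>u\<leftarrow>us. (0::real))"
          by (simp only:)
        then show ?thesis by (simp del: mult_eq_0_iff)
      qed
      finally show "(\<Sum>i\<in>UNIV. x$i / (c$i + r)) = 0" .
    qed
  qed
  then show "x = 0" by (simp add: vec_eq_iff)
qed



theorem mainTheorem18:
  fixes c :: "real^'n::finite" and m :: nat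
  assumes "m \<ge> 2"
    and "\<forall>i. c $ i > 0"
  shows "(inj (\<lambda>i. c $ i) \<longleftrightarrow> strongly_doubly_nonnegative m (cauchy_tensor c))
       \<and> (strongly_doubly_nonnegative m (cauchy_tensor c) \<longleftrightarrow> strongly_completely_positive m (cauchy_tensor c))"
proof -
  have m: "m \<ge> 2" and c: "\<forall>i. c $ i > 0" using assms by auto
  have m1: "m \<ge> 1" using m by simp
  let ?C = "cauchy_tensor c"
  let ?D = "card (index_lists m :: 'n list set)"
  obtain U where U: "\<forall>k i. U k $ i \<ge> 0" "\<forall>xs\<in>index_lists m. ?C xs = (\<Sum>k<?D. rank_one (U k) xs)"
    using cauchy_cpD[OF m1 c] unfolding cpD_def by blast
  define us where "us = map U [0..<?D]"
  have nn: "\<forall>u\<in>set us. \<forall>i. u$i \<ge> 0" using U(1) by (auto simp: us_def)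
  have dec: "\<forall>xs\<in>index_lists m. ?C xs = (\<Sum>u\<leftarrow>us. rank_one u xs)"
  proof
    fix xs :: "'n list" assume "xs \<in> index_lists m"
    then have "?C xs = (\<Sum>k<?D. rank_one (U k) xs)" using U(2) by blast
    also have "\<dots> = (\<Sum>u\<leftarrow>us. rank_one u xs)"
      unfolding us_def map_map o_def interv_sum_list_conv_sum_set_nat
      by (simp add: atLeast0LessThan)
    finally show "?C xs = (\<Sum>u\<leftarrow>us. rank_one u xs)" .
  qed
  have zero_not: "\<not> H_eigenvalue m ?C 0" if "strongly_doubly_nonnegative m ?C"
    using that unfolding strongly_doubly_nonnegative_def by blast
  have i_ii: "strongly_doubly_nonnegative m ?C" if inj: "inj (\<lambda>i. c $ i)"
    by (rule sdnn_of_decomp[OF m nn dec]) (rule kernel_lemma[OF m c inj dec], blast)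
  have ii_i: "inj (\<lambda>i. c $ i)" if sd: "strongly_doubly_nonnegative m ?C"
  proof (rule ccontr)
    assume "\<not> inj (\<lambda>i. c $ i)"
    then obtain a b where "a \<noteq> b" "c$a = c$b" by (auto simp: inj_def)
    then have "H_eigenvalue m ?C 0" using not_inj_eig[OF m] by blast
    then show False using zero_not[OF sd] by blast
  qed
  have ii_iii: "strongly_completely_positive m ?C" if sd: "strongly_doubly_nonnegative m ?C"
    unfolding strongly_completely_positive_def
  proof (intro exI[of _ us] conjI)
    show "\<forall>u\<in>set us. \<forall>i. 0 \<le> u $ i" by (rule nn)
    show "\<forall>is\<in>index_lists m. ?C is = (\<Sum>u\<leftarrow>us. rank_one u is)" by (rule dec)
    show "span (set us) = UNIV"
      unfolding span_iff_no_orth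
    proof (intro allI impI)
      fix x :: "real^'n" assume o: "\<forall>u\<in>set us. u \<bullet> x = 0"
      show "x = 0"
      proof (rule ccontr)
        assume x0: "x \<noteq> 0"
        have "tensor_apply m ?C x i = 0 * (x $ i) ^ (m - 1)" for i
        proof -
          have "tensor_apply m ?C x i = (\<Sum>u\<leftarrow>us. u$i * (u \<bullet> x)^(m-1))"
            by (rule tensor_apply_decomp[OF m1 dec])
          also have "\<dots> = (\<Sum>u\<leftarrow>us. (0::real))"
            using o m by (intro arg_cong[where f=sum_list] map_cong) auto
          finally show ?thesis by simp
        qed
        then have "H_eigenvalue m ?C 0" using x0 unfolding H_eigenvalue_def by blast
        then show False using zero_not[OF sd] by blast
      qed
    qed
  qed
  have iii_ii: "strongly_doubly_nonnegative m ?C" if scp: "strongly_completely_positive m ?C"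
  proof -
    obtain vs :: "(real^'n) list" where vs: "\<forall>u\<in>set vs. \<forall>i. u $ i \<ge> 0" "span (set vs) = UNIV"
      "\<forall>is\<in>index_lists m. ?C is = (\<Sum>u\<leftarrow>vs. rank_one u is)"
      using scp unfolding strongly_completely_positive_def by blast
    show ?thesis
      by (rule sdnn_of_decomp[OF m vs(1) vs(3)]) (use vs(2) in \<open>auto simp: span_iff_no_orth\<close>)
  qed
  show ?thesis using i_ii ii_i ii_iii iii_ii by blast
qed


end
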